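(* Let $G=(\mathfrak{N},\mathfrak{T},\mathfrak{R},\mathfrak{S})$ be a context-free grammar, $\Sigma$ a set of characters and $(\textsl{Lex},\textsl{Sel})$ a local lexing. For every input $D\in\Sigma^*$, every $k\in\{0,\ldots,|D|\}$ and every $u\in\{0,1,2,\ldots\}$: if $p,q\in\mathcal{P}_k^u$ and there is $n\in\{0,\ldots,|q|\}$ with $|\overline{p}|=|\overline{q_0\ldots q_{n-1}}|\le k$ and $[p\,q_n\ldots q_{|q|-1}]\in\mathcal{L}_{\text{prefix}}$, then $p\,q_n\ldots q_{|q|-1}\in\mathcal{P}_k^u$.
   Context: Notation: for a set $U$, $U^*$ is the set of finite sequences over $U$, $\varepsilon$ the empty sequence, juxtaposition is concatenation, $|\alpha|$ the length and $\alpha_i$ ($0\le i<|\alpha|$) the $i$-th element. A context-free grammar $(\mathfrak{N},\mathfrak{T},\mathfrak{R},\mathfrak{S})$ has disjoint nonterminals $\mathfrak{N}$ and terminals $\mathfrak{T}$, rules $\mathfrak{R}\subseteq\mathfrak{N}\times(\mathfrak{N}\cup\mathfrak{T})^*$ (written $N\rightarrow\alpha$), start symbol $\mathfrak{S}$; $\overset{*}{\Rightarrow}$ is the reflexive-transitive closure of one-step rewriting by rules. $\mathcal{L}_{\text{prefix}}=\{w\in\mathfrak{T}^*\mid\exists\alpha\in(\mathfrak{N}\cup\mathfrak{T})^*.\ \mathfrak{S}\overset{*}{\Rightarrow}w\alpha\}$. Tokens: a token is a pair $x=(t,c)\in\mathfrak{T}\times\Sigma^*$; $[x]=t$, $\overline{x}=c$.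 For a token sequence (path) $q=x_0\ldots x_r$, $[q]=[x_0]\ldots[x_r]$ and $\overline{q}=\overline{x_0}\ldots\overline{x_r}$. Local lexing: a pair $(\textsl{Lex},\textsl{Sel})$ where $\textsl{Lex}$ assigns to each $t\in\mathfrak{T}$ a function $\textsl{Lex}(t)$ which, given $D\in\Sigma^*$ and $k\in\{0,\ldots,|D|\}$, returns a set of tokens $(t,c)$ with $k+|c|\le|D|$ and $c_i=D_{k+i}$ for $0\le i\le|c|-1$; and $\textsl{Sel}$ maps any two token sets $A\subseteq B$ to a token set with $A\subseteq\textsl{Sel}(A,B)\subseteq B$. Path sets: $\operatorname{limit} f\,X=\bigcup_{n\ge0}f^n(X)$. $\operatorname{Append}_k\,T\,P=P\cup\{pt\mid p\in P,\ |\overline{p}|=k,\ t\in T,\ [pt]\in\mathcal{L}_{\text{prefix}}\}$. For $k\in\{0,\ldots,|D|\}$: $\mathcal{X}_k=\{x\in\mathfrak{T}\times\Sigma^*\mid x\in\textsl{Lex}([x])(D,k)\}$; $\mathcal{P}_0^0=\{\varepsilon\}$; $\mathcal{W}_k^u=\{x\in\mathcal{X}_k\mid\exists p\in\mathcal{P}_k^u.\ |\overline{p}|=k\wedge[px]\in\mathcal{L}_{\text{prefix}}\}$; $\mathcal{Z}_k^0=\emptyset$; $\mathcal{Z}_k^{u+1}=\textsl{Sel}(\mathcal{Z}_k^u,\mathcal{W}_k^u)$; $\mathcal{P}_k^{u+1}=\operatorname{limit}(\operatorname{Append}_k\,\mathcal{Z}_k^{u+1})\,\mathcal{P}_k^u$;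 $\mathcal{P}_k^\infty=\bigcup_u\mathcal{P}_k^u$; $\mathcal{P}_{k+1}^0=\mathcal{P}_k^\infty$. *)

theory Defs
  imports Main
begin

text \<open>Grammar symbols: nonterminals of type 'n (Inl), terminals of type 't (Inr);
  the disjoint sets N and T are represented by the types 'n and 't.
  A grammar is given by its rule set R and start symbol S.\<close>

type_synonym ('n, 't) sym = "'n + 't"
type_synonym ('n, 't) rules = "('n \<times> ('n, 't) sym list) set"

definition derives1 :: "('n, 't) rules \<Rightarrow> ('n, 't) sym list \<Rightarrow> ('n, 't) sym list \<Rightarrow> bool" where
  "derives1 R u v \<longleftrightarrow>
     (\<exists>\<alpha> N \<gamma> \<beta>. u = \<alpha> @ [Inl N] @ \<beta> \<and> v = \<alpha> @ \<gamma> @ \<beta> \<and> (N, \<gamma>) \<in> R)"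

definition derives :: "('n, 't) rules \<Rightarrow> ('n, 't) sym list \<Rightarrow> ('n, 't) sym list \<Rightarrow> bool" where
  "derives R = (derives1 R)\<^sup>*\<^sup>*"

definition Lprefix :: "('n, 't) rules \<Rightarrow> 'n \<Rightarrow> 't list set" where
  "Lprefix R S = {w. \<exists>\<alpha>. derives R [Inl S] (map Inr w @ \<alpha>)}"

type_synonym ('t, 'c) token = "'t \<times> 'c list"
type_synonym ('t, 'c) path = "('t, 'c) token list"

definition terms :: "('t, 'c) path \<Rightarrow> 't list" where
  "terms p = map fst p"

definition chars :: "('t, 'c) path \<Rightarrow> 'c list" where
  "chars p = concat (map snd p)"

type_synonym ('t, 'c) lexer = "'t \<Rightarrow> 'c list \<Rightarrow> nat \<Rightarrow> ('t, 'c) token set"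
type_synonym ('t, 'c) selector = "('t, 'c) token set \<Rightarrow> ('t, 'c) token set \<Rightarrow> ('t, 'c) token set"

definition local_lexing :: "('t, 'c) lexer \<Rightarrow> ('t, 'c) selector \<Rightarrow> bool" where
  "local_lexing Lex Sel \<longleftrightarrow>
     (\<forall>t D k. k \<le> length D \<longrightarrow>
        (\<forall>x \<in> Lex t D k. fst x = t \<and> k + length (snd x) \<le> length D \<and>
           (\<forall>i < length (snd x). snd x ! i = D ! (k + i)))) \<and>
     (\<forall>A B. A \<subseteq> B \<longrightarrow> A \<subseteq> Sel A B \<and> Sel A B \<subseteq> B)"

definition limit_set :: "('a set \<Rightarrow> 'a set) \<Rightarrow> 'a set \<Rightarrow> 'a set" where
  "limit_set f X = (\<Union>n. (f ^^ n) X)"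

definition Append :: "('n, 't) rules \<Rightarrow> 'n \<Rightarrow> nat \<Rightarrow> ('t, 'c) token set
                      \<Rightarrow> ('t, 'c) path set \<Rightarrow> ('t, 'c) path set" where
  "Append R S k T P = P \<union> {p @ [t] | p t. p \<in> P \<and> length (chars p) = k \<and> t \<in> T
                                   \<and> terms (p @ [t]) \<in> Lprefix R S}"

definition Xk :: "('t, 'c) lexer \<Rightarrow> 'c list \<Rightarrow> nat \<Rightarrow> ('t, 'c) token set" where
  "Xk Lex D k = {x. x \<in> Lex (fst x) D k}"

definition Wk :: "('n, 't) rules \<Rightarrow> 'n \<Rightarrow> ('t, 'c) lexer \<Rightarrow> 'c list \<Rightarrow> nat
                  \<Rightarrow> ('t, 'c) path set \<Rightarrow> ('t, 'c) token set" where
  "Wk R S Lex D k P = {x \<in> Xk Lex D k. \<exists>p \<in> P. length (chars p) = k \<and> terms (p @ [x]) \<in> Lprefix R S}"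

text \<open>iterZP \<dots> k P0 u = (Z_k^u, P_k^u) where P0 = P_k^0.\<close>

primrec iterZP :: "('n, 't) rules \<Rightarrow> 'n \<Rightarrow> ('t, 'c) lexer \<Rightarrow> ('t, 'c) selector \<Rightarrow> 'c list
                   \<Rightarrow> nat \<Rightarrow> ('t, 'c) path set \<Rightarrow> nat \<Rightarrow> ('t, 'c) token set \<times> ('t, 'c) path set" where
  "iterZP R S Lex Sel D k P0 0 = ({}, P0)"
| "iterZP R S Lex Sel D k P0 (Suc u) =
     (let Z = fst (iterZP R S Lex Sel D k P0 u);
          P = snd (iterZP R S Lex Sel D k P0 u);
          Z' = Sel Z (Wk R S Lex D k P)
      in (Z', limit_set (Append R S k Z') P))"

text \<open>Pinit \<dots> k = P_k^0.\<close>

primrec Pinit :: "('n, 't) rules \<Rightarrow> 'n \<Rightarrow> ('t, 'c) lexer \<Rightarrow> ('t, 'c) selector \<Rightarrow> 'c list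
                  \<Rightarrow> nat \<Rightarrow> ('t, 'c) path set" where
  "Pinit R S Lex Sel D 0 = {[]}"
| "Pinit R S Lex Sel D (Suc k) =
     (\<Union>u. snd (iterZP R S Lex Sel D k (Pinit R S Lex Sel D k) u))"

definition \<P> :: "('n, 't) rules \<Rightarrow> 'n \<Rightarrow> ('t, 'c) lexer \<Rightarrow> ('t, 'c) selector \<Rightarrow> 'c list
               \<Rightarrow> nat \<Rightarrow> nat \<Rightarrow> ('t, 'c) path set" where
  "\<P> R S Lex Sel D k u = snd (iterZP R S Lex Sel D k (Pinit R S Lex Sel D k) u)"

end

theory Submission
  imports Defs
begin

context
  fixes R :: "('n, 't) rules" and S :: 'n
    and Lex :: "('t, 'c) lexer" and Sel :: "('t, 'c) selector"
    and D :: "'c list"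
begin

definition Zs :: "nat \<Rightarrow> nat \<Rightarrow> ('t, 'c) token set" where
  "Zs k u = fst (iterZP R S Lex Sel D k (Pinit R S Lex Sel D k) u)"

abbreviation PP :: "nat \<Rightarrow> nat \<Rightarrow> ('t, 'c) path set" where
  "PP k u \<equiv> \<P> R S Lex Sel D k u"

lemma Zs0: "Zs k 0 = {}" by (simp add: Zs_def)
lemma PP0: "PP k 0 = Pinit R S Lex Sel D k" by (simp add: \<P>_def)
lemma ZsSuc: "Zs k (Suc u) = Sel (Zs k u) (Wk R S Lex D k (PP k u))"
  by (simp add: Zs_def \<P>_def Let_def)
lemma PPSuc: "PP k (Suc u) = limit_set (Append R S k (Zs k (Suc u))) (PP k u)"
  by (simp add: Zs_def \<P>_def Let_def)

lemma limit_incl: "X \<subseteq> limit_set f X"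
  unfolding limit_set_def by (rule subsetI, rule UN_I[of 0]) simp_all

lemma Append_mem:
  "p \<in> P \<Longrightarrow> length (chars p) = k \<Longrightarrow> t \<in> T \<Longrightarrow> terms (p @ [t]) \<in> Lprefix R S
   \<Longrightarrow> p @ [t] \<in> Append R S k T P"
  unfolding Append_def
  by (rule UnI2, rule CollectI, rule exI[of _ p], rule exI[of _ t]) simp

lemma limit_closed:
  assumes "x \<in> limit_set (Append R S k T) X" "length (chars x) = k" "t \<in> T"
    "terms (x @ [t]) \<in> Lprefix R S"
  shows "x @ [t] \<in> limit_set (Append R S k T) X"
proof -
  from assms(1) obtain n where n: "x \<in> (Append R S k T ^^ n) X" unfolding limit_set_def by (rule UN_E)
  hence "x @ [t] \<in> Append R S k T ((Append R S k T ^^ n) X)"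
    using assms(2-4) by (rule Append_mem)
  hence "x @ [t] \<in> (Append R S k T ^^ Suc n) X" by simp
  thus ?thesis unfolding limit_set_def by (rule UN_I[OF UNIV_I])
qed

lemma limit_induct:
  assumes "x \<in> limit_set (Append R S k T) X" "\<And>x. x \<in> X \<Longrightarrow> Q x"
    "\<And>p t. Q p \<Longrightarrow> length (chars p) = k \<Longrightarrow> t \<in> T \<Longrightarrow> Q (p @ [t])"
  shows "Q x"
proof -
  from assms(1) obtain n where n: "x \<in> (Append R S k T ^^ n) X" unfolding limit_set_def by (rule UN_E)
  have "\<forall>y \<in> (Append R S k T ^^ n) X. Q y"
  proof (induction n)
    case 0 then show ?case using assms(2) by simp
  next
    case (Suc n)
    show ?case
    proof
      fix y assume "y \<in> (Append R S k T ^^ Suc n) X"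
      hence "y \<in> Append R S k T ((Append R S k T ^^ n) X)" by simp
      then have "y \<in> (Append R S k T ^^ n) X \<or> (\<exists>p t. y = p @ [t] \<and> p \<in> (Append R S k T ^^ n) X \<and> length (chars p) = k \<and> t \<in> T)"
        unfolding Append_def by blast
      then show "Q y" using Suc.IH assms(3) by blast
    qed
  qed
  thus ?thesis using n by blast
qed

lemma PP_Suc_mono: "PP k u \<subseteq> PP k (Suc u)"
  using PPSuc limit_incl by metis

lemma PP_mono: "u \<le> v \<Longrightarrow> PP k u \<subseteq> PP k v"
  using lift_Suc_mono_le[of "PP k", OF PP_Suc_mono] by blast

lemma Wk_mono: "P \<subseteq> P' \<Longrightarrow> Wk R S Lex D k P \<subseteq> Wk R S Lex D k P'"
  unfolding Wk_def by blast

context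
  assumes LL: "local_lexing Lex Sel"
begin

lemma Sel_props: "A \<subseteq> B \<Longrightarrow> A \<subseteq> Sel A B \<and> Sel A B \<subseteq> B"
proof -
  have "\<forall>A B. A \<subseteq> B \<longrightarrow> A \<subseteq> Sel A B \<and> Sel A B \<subseteq> B"
    using LL unfolding local_lexing_def by (rule conjunct2)
  thus "A \<subseteq> B \<Longrightarrow> A \<subseteq> Sel A B \<and> Sel A B \<subseteq> B" by blast
qed

lemma Zs_W: "Zs k u \<subseteq> Wk R S Lex D k (PP k u)"
proof (induction u)
  case 0 then show ?case by (simp add: Zs0)
next
  case (Suc u)
  have "Zs k (Suc u) \<subseteq> Wk R S Lex D k (PP k u)"
    using Sel_props[OF Suc] ZsSuc by simp
  also have "\<dots> \<subseteq> Wk R S Lex D k (PP k (Suc u))" by (rule Wk_mono[OF PP_Suc_mono])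
  finally show ?case .
qed

lemma Zs_Suc_mono: "Zs k u \<subseteq> Zs k (Suc u)"
  using Sel_props[OF Zs_W] ZsSuc by simp

lemma Zs_mono: "u \<le> v \<Longrightarrow> Zs k u \<subseteq> Zs k v"
  using lift_Suc_mono_le[of "Zs k", OF Zs_Suc_mono] by blast

end

lemma Pinit_PP: "Pinit R S Lex Sel D k \<subseteq> PP k u"
  using PP_mono[of 0 u k] PP0 by simp

lemma PP_Pinit: "PP k u \<subseteq> Pinit R S Lex Sel D (Suc k)"
  by (auto simp: \<P>_def)

lemma Pinit_mono: "j \<le> k \<Longrightarrow> Pinit R S Lex Sel D j \<subseteq> Pinit R S Lex Sel D k"
  using lift_Suc_mono_le[of "Pinit R S Lex Sel D", OF order_trans[OF Pinit_PP PP_Pinit]]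
  by blast

lemma PP_lt: "j < k \<Longrightarrow> PP j v \<subseteq> PP k u"
  using PP_Pinit[of j v] Pinit_mono[of "Suc j" k] Pinit_PP[of k u] by auto

lemma chars_app: "chars (p @ q) = chars p @ chars q"
  by (simp add: chars_def)

lemma lemA: "x \<in> PP k u \<Longrightarrow> length (chars x) < k \<Longrightarrow> x \<in> Pinit R S Lex Sel D k"
proof (induction u arbitrary: x)
  case 0 then show ?case by (simp add: PP0)
next
  case (Suc u)
  have "length (chars x) < k \<longrightarrow> x \<in> Pinit R S Lex Sel D k"
    by (rule limit_induct[OF Suc.prems(1)[unfolded PPSuc]])
       (use Suc.IH in \<open>auto simp: chars_app\<close>)
  then show ?case using Suc.prems by blast
qed

lemma lemC: "x \<in> Pinit R S Lex Sel D k \<Longrightarrow> length (chars x) < k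
   \<Longrightarrow> \<exists>v. x \<in> PP (length (chars x)) v"
proof (induction k arbitrary: x)
  case 0 then show ?case by simp
next
  case (Suc k)
  then obtain v where v: "x \<in> PP k v" by (auto simp: \<P>_def)
  show ?case
  proof (cases "length (chars x) = k")
    case True then show ?thesis using v by blast
  next
    case False
    hence "length (chars x) < k" using Suc.prems by simp
    then show ?thesis using Suc.IH lemA v by blast
  qed
qed

definition AdmAt :: "nat \<Rightarrow> nat \<Rightarrow> nat \<Rightarrow> ('t, 'c) token \<Rightarrow> bool" where
  "AdmAt k u j t \<longleftrightarrow> (j < k \<and> (\<exists>v. t \<in> Zs j v)) \<or> (j = k \<and> t \<in> Zs k u)"

definition Good :: "nat \<Rightarrow> nat \<Rightarrow> ('t, 'c) path \<Rightarrow> bool" where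
  "Good k u q \<longleftrightarrow> (\<forall>i < length q. AdmAt k u (length (chars (take i q))) (q ! i))"

definition LowGood :: "nat \<Rightarrow> ('t, 'c) path \<Rightarrow> bool" where
  "LowGood k q \<longleftrightarrow> (\<forall>i < length q. length (chars (take i q)) < k \<and>
      (\<exists>v. q ! i \<in> Zs (length (chars (take i q))) v))"

lemma Good_app:
  assumes "Good k u p" "length (chars p) = k" "t \<in> Zs k u"
  shows "Good k u (p @ [t])"
  unfolding Good_def
proof (intro allI impI)
  fix i assume "i < length (p @ [t])"
  then consider "i < length p" | "i = length p" by (simp add: less_Suc_eq) blast
  then show "AdmAt k u (length (chars (take i (p @ [t])))) ((p @ [t]) ! i)"
  proof cases
    case 1
    have "AdmAt k u (length (chars (take i p))) (p ! i)" using assms(1) 1 unfolding Good_def by blast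
    moreover have "take i (p @ [t]) = take i p" "(p @ [t]) ! i = p ! i" using 1 by (auto simp: nth_append)
    ultimately show ?thesis by simp
  next
    case 2
    have "take i (p @ [t]) = p" "(p @ [t]) ! i = t" using 2 by auto
    then show ?thesis using assms(2,3) unfolding AdmAt_def by simp
  qed
qed

context
  assumes LL: "local_lexing Lex Sel"
begin

lemma lemG: "(\<And>q. q \<in> Pinit R S Lex Sel D k \<Longrightarrow> LowGood k q) \<Longrightarrow> q \<in> PP k u \<Longrightarrow> Good k u q"
proof (induction u arbitrary: q)
  case 0 then show ?case by (fastforce simp: PP0 Good_def LowGood_def AdmAt_def)
next
  case (Suc u)
  show ?case
  proof (rule limit_induct[OF Suc.prems(2)[unfolded PPSuc]])
    fix x assume "x \<in> PP k u"
    hence "Good k u x" using Suc by blast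
    then show "Good k (Suc u) x"
      unfolding Good_def AdmAt_def using Zs_Suc_mono[OF LL] by blast
  next
    fix p t assume "Good k (Suc u) p" "length (chars p) = k" "t \<in> Zs k (Suc u)"
    then show "Good k (Suc u) (p @ [t])" by (rule Good_app)
  qed
qed

lemma lowgood: "q \<in> Pinit R S Lex Sel D k \<Longrightarrow> LowGood k q"
proof (induction k arbitrary: q)
  case 0 then show ?case by (simp add: LowGood_def)
next
  case (Suc k)
  then obtain v where v: "q \<in> PP k v" by (auto simp: \<P>_def)
  have "Good k v q" by (rule lemG[OF Suc.IH v])
  then show ?case unfolding Good_def LowGood_def AdmAt_def by fastforce
qed

lemma good: "q \<in> PP k u \<Longrightarrow> Good k u q"
  using lemG lowgood by blast

lemma closure:
  assumes "x \<in> PP k u" "AdmAt k u (length (chars x)) t" "terms (x @ [t]) \<in> Lprefix R S"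
  shows "x @ [t] \<in> PP k u"
proof (cases "length (chars x) < k")
  case True
  then obtain v where v: "t \<in> Zs (length (chars x)) v" using assms(2) by (auto simp: AdmAt_def)
  define j where "j = length (chars x)"
  have "x \<in> Pinit R S Lex Sel D k" using lemA assms(1) True by blast
  then obtain v' where v': "x \<in> PP j v'" using lemC True j_def by blast
  define w where "w = max v v'"
  have "v' \<le> Suc w" using w_def by simp
  hence "x \<in> PP j (Suc w)" using v' PP_mono[of v' "Suc w" j] by blast
  moreover have "v \<le> Suc w" using w_def by simp
  hence "t \<in> Zs j (Suc w)" using v Zs_mono[OF LL, of v "Suc w" j] j_def by blast
  ultimately have "x @ [t] \<in> PP j (Suc w)"
    unfolding PPSuc using limit_closed assms(3) j_def by blast
  then show ?thesis using PP_lt[of j k "Suc w" u] True j_def by blast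
next
  case False
  hence eq: "length (chars x) = k" and t: "t \<in> Zs k u" using assms(2) by (auto simp: AdmAt_def)
  then obtain u' where u: "u = Suc u'" using Zs0 by (cases u) auto
  show ?thesis using limit_closed[OF assms(1)[unfolded u PPSuc] eq t[unfolded u] assms(3)] unfolding u PPSuc .
qed

end

lemma Lprefix_prefix: "w @ w' \<in> Lprefix R S \<Longrightarrow> w \<in> Lprefix R S"
  unfolding Lprefix_def by (auto intro: exI[of _ "map Inr w' @ _"])

end

theorem theorem3:
  fixes R :: "('n, 't) rules" and S :: 'n
    and Lex :: "('t, 'c) lexer" and Sel :: "('t, 'c) selector"
    and D :: "'c list" and k u n :: nat and p q :: "('t, 'c) path"
  assumes "local_lexing Lex Sel"
    and "k \<le> length D"
    and "p \<in> \<P> R S Lex Sel D k u"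
    and "q \<in> \<P> R S Lex Sel D k u"
    and "n \<le> length q"
    and "length (chars p) = length (chars (take n q))"
    and "length (chars (take n q)) \<le> k"
    and "terms (p @ drop n q) \<in> Lprefix R S"
  shows "p @ drop n q \<in> \<P> R S Lex Sel D k u"
proof -
  have G: "Good R S Lex Sel D k u q" using good[OF assms(1,4)] .
  have "\<forall>m \<le> length q - n. p @ take m (drop n q) \<in> \<P> R S Lex Sel D k u"
  proof (intro allI impI)
    fix m assume "m \<le> length q - n"
    then show "p @ take m (drop n q) \<in> \<P> R S Lex Sel D k u"
    proof (induction m)
      case 0 then show ?case using assms(3) by simp
    next
      case (Suc m)
      hence m: "m < length q - n" by simp
      have IH: "p @ take m (drop n q) \<in> \<P> R S Lex Sel D k u" using Suc by simp
      have tk: "take (Suc m) (drop n q) = take m (drop n q) @ [q ! (n + m)]"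
        using m assms(5) by (simp add: take_Suc_conv_app_nth)
      have len: "length (chars (p @ take m (drop n q))) = length (chars (take (n + m) q))"
        using assms(6) by (simp add: chars_app take_add)
      have adm: "AdmAt R S Lex Sel D k u (length (chars (p @ take m (drop n q)))) (q ! (n + m))"
        using G m unfolding Good_def len by auto
      have "p @ take (Suc m) (drop n q) @ drop (Suc m) (drop n q) = p @ drop n q"
        by (simp only: append_take_drop_id)
      hence "terms (p @ take (Suc m) (drop n q) @ drop (Suc m) (drop n q)) \<in> Lprefix R S"
        using assms(8) by simp
      hence "terms (p @ take (Suc m) (drop n q)) \<in> Lprefix R S"
        unfolding terms_def map_append
        using Lprefix_prefix by (metis append.assoc)
      hence "terms ((p @ take m (drop n q)) @ [q ! (n + m)]) \<in> Lprefix R S"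
        using tk by simp
      from closure[OF assms(1) IH adm this] show ?case using tk by simp
    qed
  qed
  from this[rule_format, of "length q - n"] show ?thesis by simp
qed

end
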